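(* Assume $|B|<m$ and let $\mathcal S_3=\{(w_1+uw_2,w_3)\in\mathcal R^m: w_1\in\Delta_A,\ w_2\in\Delta_B^c,\ w_3\in\Delta_C\}$. Then $\mathscr C_{\mathcal S_3}$ is a linear code over $R$ with parameters $\big(q^{|A|+|C|}(q^m-q^{|B|}),\ q^{m+|A|+|C|},\ 2(q-1)q^{|A|+|C|-1}(q^m-q^{|B|})\big)$ and Lee weight distribution: weight $0$ with frequency $1$; weight $2(q-1)q^{|A|+|C|-1}(q^m-q^{|B|})$ with frequency $q^{m+|A|+|C|}-2q^{m-|B|}+q^{m-|A\cup B|}$; weight $(q-1)q^{|A|+|C|-1}(2q^m-q^{|B|})$ with frequency $2(q^{m-|B|}-q^{m-|A\cup B|})$; weight $2(q-1)q^{m+|A|+|C|-1}$ with frequency $q^{m-|A\cup B|}-1$. Consequently $\mathscr C_{\mathcal S_3}$ is a $2$-weight code if $A\cup B=[m]$ or $A\subseteq B$, and a $3$-weight code otherwise.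
   Context: Let $q$ be a prime power, $\mathbb F_q$ the field of order $q$, $m\ge 2$ an integer and $[m]=\{1,\dots,m\}$. For $v\in\mathbb F_q^m$, $\mathrm{supp}(v)=\{i:v_i\ne0\}$ and $wt_H$ is Hamming weight. For nonempty $P\subseteq[m]$, $\Delta_P=\{v\in\mathbb F_q^m:\mathrm{supp}(v)\subseteq P\}$, $\Delta_P^c=\mathbb F_q^m\setminus\Delta_P$, $\Delta_P^*=\Delta_P\setminus\{\mathbf 0\}$. $A,B,C$ denote nonempty subsets of $[m]$. Let $R=\mathbb F_q[u]/\langle u^2\rangle$ and $\mathcal R=R\times\mathbb F_q$; each element of $\mathcal R^m$ is uniquely $(d+ue,f)$ with $d,e,f\in\mathbb F_q^m$. Define $\langle(d_1+ue_1,f_1),(d_2+ue_2,f_2)\rangle=(d_1+ue_1)\cdot(d_2+ue_2)+u\,f_1\cdot f_2\in R$, where $x\cdot y=\sum_i x_iy_i$. For a nonempty $\mathcal D\subseteq\mathcal R^m$ listed in a fixed order, $\mathscr C_{\mathcal D}=\{(\langle r,s\rangle)_{s\in\mathcal D}: r\in\mathcal R^m\}\subseteq R^{|\mathcal D|}$, an $R$-submodule (linear code over $R$). The Gray map $\Phi:R^n\to\mathbb F_q^{2n}$ is $\Phi(d+ue)=(e,d+e)$ for $d,e\in\mathbb F_q^n$; the Lee weight is $wt_L(x)=wt_H(\Phi(x))$. A code over $R$ has parameters $(n,K,D)$ if it has length $n$, cardinality $K$ and minimum nonzero Lee weight $D$. A $t$-weight code has exactly $t$ distinct nonzero weights. 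*)

theory Defs
  imports Main
begin

(* Index set [m] is modelled by a finite type 'm with CARD('m) = m;
   vectors in F_q^m are functions 'm => 'a, with 'a a finite field (q = CARD('a)). *)

definition dotv :: "('m::finite \<Rightarrow> 'a::field) \<Rightarrow> ('m \<Rightarrow> 'a) \<Rightarrow> 'a" where
  "dotv x y = (\<Sum>i\<in>UNIV. x i * y i)"

definition supp :: "('m \<Rightarrow> 'a::zero) \<Rightarrow> 'm set" where
  "supp v = {i. v i \<noteq> 0}"

definition Delta :: "'m set \<Rightarrow> ('m \<Rightarrow> 'a::zero) set" where
  "Delta P = {v. supp v \<subseteq> P}"

(* An element d + u e of R = F_q[u]/<u^2> is represented by the pair (d, e). *)
type_synonym 'a ring_R = "'a \<times> 'a"

definition R_add :: "'a::field ring_R \<Rightarrow> 'a ring_R \<Rightarrow> 'a ring_R" where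
  "R_add x y = (fst x + fst y, snd x + snd y)"

definition R_mult :: "'a::field ring_R \<Rightarrow> 'a ring_R \<Rightarrow> 'a ring_R" where
  "R_mult x y = (fst x * fst y, fst x * snd y + snd x * fst y)"

(* An element (d + u e, f) of \<R>^m is represented by the triple (d, e, f). *)
type_synonym ('m, 'a) elt_Rm = "('m \<Rightarrow> 'a) \<times> ('m \<Rightarrow> 'a) \<times> ('m \<Rightarrow> 'a)"

(* <(d1+u e1, f1), (d2+u e2, f2)> = (d1+u e1).(d2+u e2) + u f1.f2
                                 = d1.d2 + u (d1.e2 + e1.d2 + f1.f2) *)
definition ipR :: "('m::finite, 'a::field) elt_Rm \<Rightarrow> ('m, 'a) elt_Rm \<Rightarrow> 'a ring_R" where
  "ipR r s = (case r of (d1, e1, f1) \<Rightarrow> case s of (d2, e2, f2) \<Rightarrow>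
      (dotv d1 d2, dotv d1 e2 + dotv e1 d2 + dotv f1 f2))"

(* Codewords of C_D are functions on the (finite) defining set D; outside D they are 0. *)
definition codeC :: "('m::finite, 'a::field) elt_Rm set \<Rightarrow> (('m, 'a) elt_Rm \<Rightarrow> 'a ring_R) set" where
  "codeC D = {(\<lambda>s. if s \<in> D then ipR r s else (0, 0)) | r. True}"

(* Lee weight of d + u e: Hamming weight of the Gray image (e, d + e). *)
definition leeR :: "'a::field ring_R \<Rightarrow> nat" where
  "leeR x = (if snd x = 0 then 0 else 1) + (if fst x + snd x = 0 then 0 else 1)"

definition leeW :: "('m, 'a) elt_Rm set \<Rightarrow> (('m, 'a) elt_Rm \<Rightarrow> 'a::field ring_R) \<Rightarrow> nat" where
  "leeW D c = (\<Sum>s\<in>D. leeR (c s))"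

definition linear_code_R :: "('m, 'a) elt_Rm set \<Rightarrow> (('m, 'a) elt_Rm \<Rightarrow> 'a::field ring_R) set \<Rightarrow> bool" where
  "linear_code_R D C \<longleftrightarrow>
     (\<forall>c\<in>C. \<forall>s. s \<notin> D \<longrightarrow> c s = (0, 0)) \<and>
     (\<lambda>s. (0, 0)) \<in> C \<and>
     (\<forall>c1\<in>C. \<forall>c2\<in>C. (\<lambda>s. R_add (c1 s) (c2 s)) \<in> C) \<and>
     (\<forall>a. \<forall>c\<in>C. (\<lambda>s. R_mult a (c s)) \<in> C)"

definition nonzero_weights :: "('m, 'a) elt_Rm set \<Rightarrow> (('m, 'a) elt_Rm \<Rightarrow> 'a::field ring_R) set \<Rightarrow> nat set" where
  "nonzero_weights D C = {leeW D c | c. c \<in> C \<and> leeW D c \<noteq> 0}"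

definition min_lee :: "('m, 'a) elt_Rm set \<Rightarrow> (('m, 'a) elt_Rm \<Rightarrow> 'a::field ring_R) set \<Rightarrow> nat" where
  "min_lee D C = Min (nonzero_weights D C)"

definition S3 :: "'m set \<Rightarrow> 'm set \<Rightarrow> 'm set \<Rightarrow> ('m::finite, 'a::field) elt_Rm set" where
  "S3 A B C = {(w1, w2, w3). w1 \<in> Delta A \<and> w2 \<notin> Delta B \<and> w3 \<in> Delta C}"

end

theory Submission imports Defs "HOL-Library.FuncSet" begin

lemma dotv_lin: "dotv l (\<lambda>i. w i + c * z i) = dotv l w + c * dotv l z"
  unfolding dotv_def by (simp add: algebra_simps sum.distrib sum_distrib_left)

lemma dotv_add_left: "dotv (\<lambda>i. x i + y i) w = dotv x w + dotv y w"
  unfolding dotv_def by (simp add: algebra_simps sum.distrib)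

lemma dotv_zero1[simp]: "dotv (\<lambda>_. 0) w = 0"
  unfolding dotv_def by simp
lemma dotv_zero2[simp]: "dotv l (\<lambda>_. 0) = 0"
  unfolding dotv_def by simp

lemma dotv_unit: "dotv l (\<lambda>k. if k = i then 1 else 0) = l i"
  unfolding dotv_def by (simp add: if_distrib cong: if_cong)

lemma dotv_vanish: "(\<forall>i\<in>P. l i = 0) \<Longrightarrow> w \<in> Delta P \<Longrightarrow> dotv l w = 0"
  unfolding dotv_def Delta_def supp_def by (rule sum.neutral) auto

lemma dotv_restrict: "w \<in> Delta P \<Longrightarrow> dotv (\<lambda>i. if i \<in> P then l i else 0) w = dotv l w"
  unfolding dotv_def Delta_def supp_def by (rule sum.cong) auto

lemma Delta_lin: "(w :: 'm \<Rightarrow> 'a::field) \<in> Delta P \<Longrightarrow> z \<in> Delta P \<Longrightarrow> (\<lambda>i. w i + c * z i) \<in> Delta P"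
proof -
  assume w: "w \<in> Delta P" and z: "z \<in> Delta P"
  have "\<And>i. i \<notin> P \<Longrightarrow> w i = 0 \<and> z i = 0" using w z unfolding Delta_def supp_def by blast
  hence "{i. w i + c * z i \<noteq> 0} \<subseteq> P"
  proof (intro subsetI)
    fix i assume h: "\<And>i. i \<notin> P \<Longrightarrow> w i = 0 \<and> z i = 0" and "i \<in> {i. w i + c * z i \<noteq> 0}"
    thus "i \<in> P" by (cases "i \<in> P") auto
  qed
  thus ?thesis unfolding Delta_def supp_def by simp
qed

lemma card_Delta: "card (Delta P :: ('m::finite \<Rightarrow> 'a::{finite,zero}) set) = card (UNIV :: 'a set) ^ card P"
proof -
  have inj: "inj_on (\<lambda>v. restrict v P) (Delta P :: ('m \<Rightarrow> 'a) set)"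
  proof (rule inj_onI)
    fix x y :: "'m \<Rightarrow> 'a" assume x: "x \<in> Delta P" and y: "y \<in> Delta P" and e: "restrict x P = restrict y P"
    show "x = y"
    proof
      fix i show "x i = y i"
      proof (cases "i \<in> P")
        case True thus ?thesis using e by (metis restrict_apply')
      next
        case False
        have "x i = 0" using x False unfolding Delta_def supp_def by blast
        moreover have "y i = 0" using y False unfolding Delta_def supp_def by blast
        ultimately show ?thesis by simp
      qed
    qed
  qed
  have img: "(\<lambda>v. restrict v P) ` (Delta P :: ('m \<Rightarrow> 'a) set) = PiE P (\<lambda>_. UNIV)"
  proof
    show "(\<lambda>v. restrict v P) ` Delta P \<subseteq> PiE P (\<lambda>_. UNIV)" by auto
    show "PiE P (\<lambda>_. UNIV) \<subseteq> (\<lambda>v. restrict v P) ` (Delta P :: ('m \<Rightarrow> 'a) set)"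
    proof
      fix g :: "'m \<Rightarrow> 'a" assume g: "g \<in> PiE P (\<lambda>_. UNIV)"
      let ?v = "\<lambda>i. if i \<in> P then g i else 0"
      have "?v \<in> Delta P" unfolding Delta_def supp_def by auto
      moreover have "restrict ?v P = g" using g by (auto simp: restrict_def PiE_def extensional_def fun_eq_iff)
      ultimately show "g \<in> (\<lambda>v. restrict v P) ` Delta P" by (intro image_eqI[where x="?v"]) auto
    qed
  qed
  have "card (Delta P :: ('m \<Rightarrow> 'a) set) = card (PiE P (\<lambda>_. (UNIV :: 'a set)))"
    using card_image[OF inj] img by simp
  also have "\<dots> = card (UNIV :: 'a set) ^ card P" by (simp add: card_PiE prod_constant)
  finally show ?thesis .
qed

definition phi :: "('m::finite,'a::field) elt_Rm \<Rightarrow> ('m,'a) elt_Rm \<Rightarrow> 'a" where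
  "phi l s = dotv (fst l) (fst s) + dotv (fst (snd l)) (fst (snd s)) + dotv (snd (snd l)) (snd (snd s))"

definition VV :: "'m set \<Rightarrow> 'm set \<Rightarrow> 'm set \<Rightarrow> ('m,'a::zero) elt_Rm set" where
  "VV A P C = Delta A \<times> Delta P \<times> Delta C"

lemma card_VV: "card (VV A P C :: ('m::finite,'a::{finite,zero}) elt_Rm set)
   = card (UNIV :: 'a set) ^ (card A + card P + card C)"
  unfolding VV_def by (simp add: card_cartesian_product card_Delta power_add)

lemma Delta_UNIV[simp]: "Delta UNIV = UNIV"
  unfolding Delta_def by auto

lemma S3_eq: "S3 A B C = VV A UNIV C - VV A B C"
  unfolding S3_def VV_def by auto


lemma fiber:
  fixes l s0 :: "('m::finite,'a::{finite,field}) elt_Rm"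
  assumes s0: "s0 \<in> VV A P C" and nz: "phi l s0 \<noteq> 0"
  shows "card (UNIV :: 'a set) * card {s\<in>VV A P C. phi l s = 0} = card (VV A P C :: ('m,'a) elt_Rm set)"
proof -
  let ?S = "VV A P C :: ('m,'a) elt_Rm set"
  define \<alpha> where "\<alpha> = phi l s0"
  define tr where "tr t s = ((\<lambda>i. fst s i + (t/\<alpha>) * fst s0 i),
        (\<lambda>i. fst (snd s) i + (t/\<alpha>) * fst (snd s0) i),
        (\<lambda>i. snd (snd s) i + (t/\<alpha>) * snd (snd s0) i))" for t s
  have closed: "tr t s \<in> ?S" if "s \<in> ?S" for t s
    using that s0 Delta_lin[of "fst s" A "fst s0" "t/\<alpha>"] Delta_lin[of "fst (snd s)" P "fst (snd s0)" "t/\<alpha>"]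
      Delta_lin[of "snd (snd s)" C "snd (snd s0)" "t/\<alpha>"]
    unfolding tr_def VV_def by (auto simp: mem_Times_iff)
  have phitr: "phi l (tr t s) = phi l s + t" for t s
  proof -
    have "phi l (tr t s) = phi l s + (t/\<alpha>) * phi l s0"
      unfolding tr_def phi_def fst_conv snd_conv dotv_lin by (simp add: algebra_simps)
    also have "(t/\<alpha>) * phi l s0 = t" using nz unfolding \<alpha>_def by simp
    finally show ?thesis .
  qed
  have inv: "tr (-t) (tr t s) = s" for t s
    unfolding tr_def by (simp add: fun_eq_iff algebra_simps)
  let ?F = "\<lambda>t. {s\<in>?S. phi l s = t}"
  have bij: "bij_betw (tr t) (?F 0) (?F t)" for t
  proof (rule bij_betw_byWitness[where f'="tr (-t)"])
    show "\<forall>a\<in>?F 0. tr (- t) (tr t a) = a" using inv by blast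
    show "\<forall>a\<in>?F t. tr t (tr (- t) a) = a" using inv[of "-t"] by simp
    show "tr t ` ?F 0 \<subseteq> ?F t" using closed phitr by auto
    show "tr (- t) ` ?F t \<subseteq> ?F 0" using closed phitr by auto
  qed
  have cardF: "card (?F t) = card (?F 0)" for t
    using bij_betw_same_card[OF bij[of t]] by simp
  have "?S = (\<Union>t\<in>UNIV. ?F t)" by auto
  moreover have "card (\<Union>t\<in>UNIV. ?F t) = (\<Sum>t\<in>UNIV. card (?F t))"
    by (rule card_UN_disjoint) auto
  ultimately have "card ?S = (\<Sum>t\<in>UNIV. card (?F t))" by simp
  also have "\<dots> = (\<Sum>t\<in>(UNIV::'a set). card (?F 0))" by (rule sum.cong[OF refl]) (rule cardF)
  also have "\<dots> = card (UNIV :: 'a set) * card (?F 0)" by simp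
  finally show ?thesis by simp
qed

definition nzc :: "'m set \<Rightarrow> 'm set \<Rightarrow> 'm set \<Rightarrow> ('m,'a::zero) elt_Rm \<Rightarrow> bool" where
  "nzc A P C l = ((\<exists>i\<in>A. fst l i \<noteq> 0) \<or> (\<exists>i\<in>P. fst (snd l) i \<noteq> 0) \<or> (\<exists>i\<in>C. snd (snd l) i \<noteq> 0))"

definition unitv :: "'m \<Rightarrow> 'm \<Rightarrow> 'a::field" where
  "unitv i = (\<lambda>k. if k = i then 1 else 0)"

lemma unit_Delta: "i \<in> P \<Longrightarrow> unitv i \<in> Delta P"
  unfolding unitv_def Delta_def supp_def by auto

lemma zero_Delta[simp]: "(\<lambda>_. 0) \<in> Delta P"
  unfolding Delta_def supp_def by auto

lemma dotv_unitv[simp]: "dotv l (unitv i) = l i"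
  unfolding unitv_def by (rule dotv_unit)

lemma nz_iff:
  fixes l :: "('m::finite,'a::field) elt_Rm"
  shows "(\<exists>s\<in>VV A P C. phi l s \<noteq> 0) \<longleftrightarrow> nzc A P C l"
proof
  assume "\<exists>s\<in>VV A P C. phi l s \<noteq> 0"
  then obtain s where s: "s \<in> VV A P C" "phi l s \<noteq> 0" by blast
  show "nzc A P C l"
  proof (rule ccontr)
    assume "\<not> nzc A P C l"
    hence "\<forall>i\<in>A. fst l i = 0" "\<forall>i\<in>P. fst (snd l) i = 0" "\<forall>i\<in>C. snd (snd l) i = 0"
      unfolding nzc_def by auto
    hence "phi l s = 0" using s(1) unfolding phi_def VV_def by (auto simp: dotv_vanish mem_Times_iff)
    thus False using s(2) by simp
  qed
next
  assume "nzc A P C l"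
  then consider (a) i where "i \<in> A" "fst l i \<noteq> 0" | (b) i where "i \<in> P" "fst (snd l) i \<noteq> 0"
    | (c) i where "i \<in> C" "snd (snd l) i \<noteq> 0" unfolding nzc_def by blast
  thus "\<exists>s\<in>VV A P C. phi l s \<noteq> 0"
  proof cases
    case a
    show ?thesis by (rule bexI[where x="(unitv i, \<lambda>_. 0, \<lambda>_. 0)"])
      (use a in \<open>auto simp: phi_def VV_def unit_Delta\<close>)
  next
    case b
    show ?thesis by (rule bexI[where x="(\<lambda>_. 0, unitv i, \<lambda>_. 0)"])
      (use b in \<open>auto simp: phi_def VV_def unit_Delta\<close>)
  next
    case c
    show ?thesis by (rule bexI[where x="(\<lambda>_. 0, \<lambda>_. 0, unitv i)"])
      (use c in \<open>auto simp: phi_def VV_def unit_Delta\<close>)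
  qed
qed

lemma q_ge2: "card (UNIV :: 'a::{finite,field} set) \<ge> 2"
proof -
  have "card {0::'a, 1} = 2" by simp
  moreover have "card {0::'a, 1} \<le> card (UNIV :: 'a set)" by (rule card_mono) auto
  ultimately show ?thesis by simp
qed

lemma cnt:
  fixes l :: "('m::finite,'a::{finite,field}) elt_Rm"
  assumes k: "k = card A + card P + card C" "k \<ge> 1"
  shows "card {s\<in>VV A P C. phi l s \<noteq> 0}
     = (if nzc A P C l then (card (UNIV :: 'a set) - 1) * card (UNIV :: 'a set) ^ (k - 1) else 0)"
proof (cases "nzc A P C l")
  case True
  let ?q = "card (UNIV :: 'a set)"
  let ?S = "VV A P C :: ('m,'a) elt_Rm set"
  obtain s0 where s0: "s0 \<in> ?S" "phi l s0 \<noteq> 0" using True nz_iff by blast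
  have f: "?q * card {s\<in>?S. phi l s = 0} = ?q ^ k" using fiber[OF s0] card_VV k(1) by metis
  have qk: "?q ^ k = ?q * ?q ^ (k - 1)" using k(2) by (metis Suc_diff_1 less_le_trans power_Suc zero_less_one)
  have q0: "?q > 0" using q_ge2[where 'a='a] by linarith
  have c0: "card {s\<in>?S. phi l s = 0} = ?q ^ (k - 1)" using f qk q0 by simp
  have "{s\<in>?S. phi l s \<noteq> 0} = ?S - {s\<in>?S. phi l s = 0}" by auto
  hence "card {s\<in>?S. phi l s \<noteq> 0} = card ?S - card {s\<in>?S. phi l s = 0}"
    by (simp add: card_Diff_subset)
  also have "\<dots> = ?q * ?q ^ (k - 1) - ?q ^ (k - 1)" using c0 card_VV k(1) qk by metis
  also have "\<dots> = (?q - 1) * ?q ^ (k - 1)" by (simp add: diff_mult_distrib)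
  finally show ?thesis using True by simp
next
  case False
  hence "{s\<in>VV A P C. phi l s \<noteq> 0} = {}" using nz_iff by blast
  thus ?thesis using False by simp
qed

lemma cntD:
  fixes l :: "('m::finite,'a::{finite,field}) elt_Rm"
  shows "card {s\<in>S3 A B C. phi l s \<noteq> 0}
     = card {s\<in>VV A UNIV C. phi l s \<noteq> 0} - card {s\<in>VV A B C. phi l s \<noteq> 0}"
proof -
  have sub: "VV A B C \<subseteq> (VV A UNIV C :: ('m,'a) elt_Rm set)" unfolding VV_def by auto
  have "{s\<in>S3 A B C. phi l s \<noteq> 0} = {s\<in>VV A UNIV C. phi l s \<noteq> 0} - {s\<in>VV A B C. phi l s \<noteq> 0}"
    unfolding S3_eq by auto
  moreover have "{s\<in>VV A B C. phi l s \<noteq> 0} \<subseteq> {s\<in>VV A UNIV C. phi l s \<noteq> 0}" using sub by auto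
  ultimately show ?thesis by (simp add: card_Diff_subset)
qed

definition cw :: "('m::finite,'a::field) elt_Rm set \<Rightarrow> ('m,'a) elt_Rm \<Rightarrow> (('m,'a) elt_Rm \<Rightarrow> 'a ring_R)" where
  "cw D r = (\<lambda>s. if s \<in> D then ipR r s else (0, 0))"

lemma codeC_eq: "codeC D = range (cw D)"
  unfolding codeC_def cw_def by auto

lemma ipR_phi: "ipR r s = (dotv (fst r) (fst s), phi (fst (snd r), fst r, snd (snd r)) s)"
  unfolding ipR_def phi_def by (cases r; cases s) (simp add: algebra_simps)

lemma ipR_phi2: "fst (ipR r s) + snd (ipR r s) = phi (\<lambda>i. fst r i + fst (snd r) i, fst r, snd (snd r)) s"
  unfolding ipR_phi phi_def by (simp add: dotv_add_left algebra_simps)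

lemma sum_ind: "finite D \<Longrightarrow> (\<Sum>s\<in>D. (if P s then 0 else 1::nat)) = card {s\<in>D. \<not> P s}"
proof -
  assume "finite D"
  have "(\<Sum>s\<in>D. (if P s then 0 else 1::nat)) = (\<Sum>s\<in>D. (if \<not> P s then 1 else 0::nat))"
    by (rule sum.cong) auto
  also have "\<dots> = card {s\<in>D. \<not> P s}" using \<open>finite D\<close> by (simp add: sum.inter_filter[symmetric])
  finally show ?thesis .
qed

lemma leeW_cw:
  fixes r :: "('m::finite,'a::{finite,field}) elt_Rm"
  shows "leeW D (cw D r) = card {s\<in>D. phi (fst (snd r), fst r, snd (snd r)) s \<noteq> 0}
      + card {s\<in>D. phi (\<lambda>i. fst r i + fst (snd r) i, fst r, snd (snd r)) s \<noteq> 0}"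
proof -
  have "leeW D (cw D r) = (\<Sum>s\<in>D. leeR (ipR r s))"
    unfolding leeW_def cw_def by (rule sum.cong) auto
  also have "\<dots> = (\<Sum>s\<in>D. (if phi (fst (snd r), fst r, snd (snd r)) s = 0 then 0 else 1::nat))
      + (\<Sum>s\<in>D. (if phi (\<lambda>i. fst r i + fst (snd r) i, fst r, snd (snd r)) s = 0 then 0 else 1::nat))"
    unfolding leeR_def ipR_phi2[symmetric] sum.distrib[symmetric] by (rule sum.cong) (auto simp: ipR_phi)
  also have "\<dots> = card {s\<in>D. phi (fst (snd r), fst r, snd (snd r)) s \<noteq> 0}
      + card {s\<in>D. phi (\<lambda>i. fst r i + fst (snd r) i, fst r, snd (snd r)) s \<noteq> 0}"
    by (simp add: sum_ind)
  finally show ?thesis .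
qed

lemma Delta_nz: "e \<in> Delta A \<Longrightarrow> (\<exists>i\<in>A. e i \<noteq> 0) \<longleftrightarrow> e \<noteq> (\<lambda>_. 0)"
  unfolding Delta_def supp_def by (auto simp: fun_eq_iff)

definition nd :: "'m set \<Rightarrow> ('m \<Rightarrow> 'a::field) \<Rightarrow> 'm \<Rightarrow> 'a" where
  "nd A d = (\<lambda>i. if i \<in> A then - d i else 0)"

definition E3 :: "'m set \<Rightarrow> 'm set \<Rightarrow> ('m::finite,'a::field) elt_Rm set" where
  "E3 A B = {(d, \<lambda>_. 0, \<lambda>_. 0) | d. d \<noteq> (\<lambda>_. 0) \<and> (\<forall>i\<in>A\<union>B. d i = 0)}"

definition E2 :: "'m set \<Rightarrow> 'm set \<Rightarrow> ('m::finite,'a::field) elt_Rm set" where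
  "E2 A B = {(d, e, \<lambda>_. 0) | d e. (\<forall>i\<in>B. d i = 0) \<and> (\<exists>i\<in>A. d i \<noteq> 0) \<and> (e = (\<lambda>_. 0) \<or> e = nd A d)}"

lemma wclass:
  fixes d e f :: "'m::finite \<Rightarrow> 'a::{finite,field}" and A B C :: "'m set"
  assumes A: "A \<noteq> {}" and e: "e \<in> Delta A" and f: "f \<in> Delta C"
  defines "cU \<equiv> (card (UNIV :: 'a set) - 1) * card (UNIV :: 'a set) ^ (card A + card (UNIV :: 'm set) + card C - 1)"
    and "cB \<equiv> (card (UNIV :: 'a set) - 1) * card (UNIV :: 'a set) ^ (card A + card B + card C - 1)"
  shows "leeW (S3 A B C) (cw (S3 A B C) (d, e, f)) =
    (if (d, e, f) = (\<lambda>_. 0, \<lambda>_. 0, \<lambda>_. 0) then 0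
     else if (d, e, f) \<in> E3 A B then 2 * cU
     else if (d, e, f) \<in> E2 A B then cU + (cU - cB)
     else 2 * (cU - cB))"
proof -
  let ?z = "(\<lambda>_. 0) :: 'm \<Rightarrow> 'a"
  have kA: "card A \<ge> 1" using A by (simp add: Suc_le_eq card_gt_0_iff)
  have cntU: "card {s\<in>VV A UNIV C. phi l s \<noteq> 0} = (if nzc A UNIV C l then cU else 0)" for l :: "('m,'a) elt_Rm"
    unfolding cU_def by (rule cnt) (use kA in auto)
  have cntB: "card {s\<in>VV A B C. phi l s \<noteq> 0} = (if nzc A B C l then cB else 0)" for l :: "('m,'a) elt_Rm"
    unfolding cB_def by (rule cnt) (use kA in auto)
  have eA: "(\<exists>i\<in>A. e i \<noteq> 0) \<longleftrightarrow> e \<noteq> ?z" using Delta_nz[OF e] .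
  have fC: "(\<exists>i\<in>C. f i \<noteq> 0) \<longleftrightarrow> f \<noteq> ?z" using Delta_nz[OF f] .
  have dU: "(\<exists>i\<in>UNIV. d i \<noteq> 0) \<longleftrightarrow> d \<noteq> ?z" by (auto simp: fun_eq_iff)
  define dB where "dB = (\<exists>i\<in>B. d i \<noteq> 0)"
  define g where "g = (\<exists>i\<in>A. d i + e i \<noteq> 0)"
  have h1: "card {s\<in>S3 A B C. phi (e, d, f) s \<noteq> 0} =
     (if e \<noteq> ?z \<or> d \<noteq> ?z \<or> f \<noteq> ?z then cU else 0) - (if e \<noteq> ?z \<or> dB \<or> f \<noteq> ?z then cB else 0)"
    unfolding cntD cntU cntB nzc_def fst_conv snd_conv eA fC dU dB_def ..
  have h2: "card {s\<in>S3 A B C. phi (\<lambda>i. d i + e i, d, f) s \<noteq> 0} =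
     (if g \<or> d \<noteq> ?z \<or> f \<noteq> ?z then cU else 0) - (if g \<or> dB \<or> f \<noteq> ?z then cB else 0)"
    unfolding cntD cntU cntB nzc_def fst_conv snd_conv fC dU dB_def g_def ..
  have W: "leeW (S3 A B C) (cw (S3 A B C) (d, e, f)) = 
     ((if e \<noteq> ?z \<or> d \<noteq> ?z \<or> f \<noteq> ?z then cU else 0) - (if e \<noteq> ?z \<or> dB \<or> f \<noteq> ?z then cB else 0))
   + ((if g \<or> d \<noteq> ?z \<or> f \<noteq> ?z then cU else 0) - (if g \<or> dB \<or> f \<noteq> ?z then cB else 0))"
    using leeW_cw[of "S3 A B C" "(d, e, f)"] h1 h2 by simp
  have dBd: "dB \<Longrightarrow> d \<noteq> ?z" unfolding dB_def by auto
  have inE3: "(d, e, f) \<in> E3 A B \<longleftrightarrow> d \<noteq> ?z \<and> (\<forall>i\<in>A\<union>B. d i = 0) \<and> e = ?z \<and> f = ?z"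
    unfolding E3_def by auto
  have inE2: "(d, e, f) \<in> E2 A B \<longleftrightarrow> \<not> dB \<and> (\<exists>i\<in>A. d i \<noteq> 0) \<and> f = ?z \<and> (e = ?z \<or> e = nd A d)"
    unfolding E2_def dB_def by auto
  show ?thesis
  proof (cases dB)
    case True
    hence "(d, e, f) \<notin> E3 A B" "(d, e, f) \<notin> E2 A B" "d \<noteq> ?z"
      using inE3 inE2 dBd unfolding dB_def by auto
    thus ?thesis unfolding W using True by simp
  next
    case nB: False
    show ?thesis
    proof (cases "d = ?z")
      case True
      hence "g \<longleftrightarrow> e \<noteq> ?z" unfolding g_def using eA by simp
      moreover have "(d, e, f) \<notin> E3 A B" "(d, e, f) \<notin> E2 A B" using True inE3 inE2 by auto
      ultimately show ?thesis unfolding W using True nB by auto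
    next
      case dnz: False
      show ?thesis
      proof (cases "f = ?z")
        case False
        hence "(d, e, f) \<notin> E3 A B" "(d, e, f) \<notin> E2 A B" using inE3 inE2 by auto
        thus ?thesis unfolding W using False nB dnz by auto
      next
        case fz: True
        show ?thesis
        proof (cases "e = ?z")
          case True
          hence gd: "g \<longleftrightarrow> (\<exists>i\<in>A. d i \<noteq> 0)" unfolding g_def by simp
          show ?thesis
          proof (cases g)
            case True
            hence "(d, e, f) \<notin> E3 A B" "(d, e, f) \<in> E2 A B" using inE3 inE2 gd fz nB \<open>e = ?z\<close> by auto
            thus ?thesis unfolding W using True nB dnz fz \<open>e = ?z\<close> by auto
          next
            case False
            hence "(d, e, f) \<in> E3 A B" using inE3 gd fz nB dnz \<open>e = ?z\<close> unfolding dB_def by auto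
            thus ?thesis unfolding W using False nB dnz fz \<open>e = ?z\<close> by auto
          qed
        next
          case enz: False
          hence n3: "(d, e, f) \<notin> E3 A B" using inE3 by auto
          show ?thesis
          proof (cases g)
            case True
            have "e \<noteq> nd A d" using True unfolding g_def nd_def by auto
            hence "(d, e, f) \<notin> E2 A B" using inE2 enz by auto
            thus ?thesis unfolding W using True nB dnz fz enz n3 by auto
          next
            case False
            have "e = nd A d"
            proof
              fix i show "e i = nd A d i"
              proof (cases "i \<in> A")
                case True thus ?thesis using False unfolding g_def nd_def by (auto simp: eq_neg_iff_add_eq_0 add.commute)
              next
                case False thus ?thesis using e unfolding nd_def Delta_def supp_def by auto
              qed
            qed
            moreover have "\<exists>i\<in>A. d i \<noteq> 0"
            proof (rule ccontr)
              assume "\<not> (\<exists>i\<in>A. d i \<noteq> 0)"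
              hence "e = ?z" using \<open>e = nd A d\<close> unfolding nd_def by (auto simp: fun_eq_iff)
              thus False using enz by simp
            qed
            ultimately have "(d, e, f) \<in> E2 A B" using inE2 nB fz unfolding dB_def by auto
            thus ?thesis unfolding W using False nB dnz fz enz n3 by auto
          qed
        qed
      qed
    qed
  qed
qed

lemma Delta_out: "v \<in> Delta P \<Longrightarrow> i \<notin> P \<Longrightarrow> v i = 0"
  unfolding Delta_def supp_def by blast

lemma S3_mem: "(w1, w2, w3) \<in> S3 A B C \<longleftrightarrow> w1 \<in> Delta A \<and> w2 \<notin> Delta B \<and> w3 \<in> Delta C"
  unfolding S3_def by auto

lemma cw_proj:
  "cw (S3 A B C) (d, e, f) = cw (S3 A B C) (d, \<lambda>i. if i \<in> A then e i else 0, \<lambda>i. if i \<in> C then f i else 0)"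
proof
  fix s show "cw (S3 A B C) (d, e, f) s = cw (S3 A B C) (d, \<lambda>i. if i \<in> A then e i else 0, \<lambda>i. if i \<in> C then f i else 0) s"
    unfolding cw_def ipR_def by (cases s) (auto simp: S3_mem dotv_restrict)
qed

lemma unitv_notB: "j \<notin> B \<Longrightarrow> unitv j \<notin> Delta B"
  unfolding unitv_def Delta_def supp_def by auto

lemma dotv_add_right: "dotv l (\<lambda>k. x k + y k) = dotv l x + dotv l y"
  unfolding dotv_def by (simp add: algebra_simps sum.distrib)

lemma unitv2_notB: "j \<notin> B \<Longrightarrow> i \<noteq> j \<Longrightarrow> (\<lambda>k. unitv i k + unitv j k) \<notin> Delta B"
  unfolding unitv_def Delta_def supp_def by auto

lemma snd_ipR: "snd (ipR (d, e, f) (w1, w2, w3)) = dotv d w2 + dotv e w1 + dotv f w3"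
  unfolding ipR_def by simp

lemma cw_inj:
  assumes jB: "j \<notin> B"
  shows "inj_on (cw (S3 A B C)) (UNIV \<times> Delta A \<times> (Delta C :: ('m::finite \<Rightarrow> 'a::field) set))"
proof (rule inj_onI)
  fix r r' :: "('m,'a) elt_Rm"
  assume r: "r \<in> UNIV \<times> Delta A \<times> Delta C" and r': "r' \<in> UNIV \<times> Delta A \<times> Delta C"
    and eq: "cw (S3 A B C) r = cw (S3 A B C) r'"
  obtain d e f where rd: "r = (d, e, f)" by (cases r) auto
  obtain d' e' f' where rd': "r' = (d', e', f')" by (cases r') auto
  have e: "e \<in> Delta A" "f \<in> Delta C" "e' \<in> Delta A" "f' \<in> Delta C" using r r' rd rd' by auto
  have key: "dotv d w2 + dotv e w1 + dotv f w3 = dotv d' w2 + dotv e' w1 + dotv f' w3"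
    if "w1 \<in> Delta A" "w2 \<notin> Delta B" "w3 \<in> Delta C" for w1 w2 w3
  proof -
    have "cw (S3 A B C) r (w1, w2, w3) = cw (S3 A B C) r' (w1, w2, w3)" using eq by simp
    hence "ipR r (w1, w2, w3) = ipR r' (w1, w2, w3)" using that unfolding cw_def by (simp add: S3_mem)
    thus ?thesis using snd_ipR rd rd' by metis
  qed
  have dj: "d j = d' j" using key[of "\<lambda>_. 0" "unitv j" "\<lambda>_. 0"] unitv_notB[OF jB] by simp
  have dd: "d = d'"
  proof
    fix i show "d i = d' i"
    proof (cases "i \<in> B")
      case False thus ?thesis using key[of "\<lambda>_. 0" "unitv i" "\<lambda>_. 0"] unitv_notB[OF False] by simp
    next
      case True
      hence "i \<noteq> j" using jB by auto
      thus ?thesis using key[of "\<lambda>_. 0" "\<lambda>k. unitv i k + unitv j k" "\<lambda>_. 0"] unitv2_notB[OF jB \<open>i \<noteq> j\<close>] dj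
        by (simp add: dotv_add_right)
    qed
  qed
  have ee: "e = e'"
  proof
    fix i show "e i = e' i"
    proof (cases "i \<in> A")
      case True thus ?thesis using key[of "unitv i" "unitv j" "\<lambda>_. 0"] unitv_notB[OF jB] unit_Delta[OF True] dj by simp
    next
      case False thus ?thesis using e Delta_out by metis
    qed
  qed
  have ff: "f = f'"
  proof
    fix i show "f i = f' i"
    proof (cases "i \<in> C")
      case True thus ?thesis using key[of "\<lambda>_. 0" "unitv j" "unitv i"] unitv_notB[OF jB] unit_Delta[OF True] dj by simp
    next
      case False thus ?thesis using e Delta_out by metis
    qed
  qed
  show "r = r'" using rd rd' dd ee ff by simp
qed

lemma dotv_scale_left: "dotv (\<lambda>i. c * x i) w = c * dotv x w"
  unfolding dotv_def by (simp add: sum_distrib_left algebra_simps)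

lemma lin_code: "linear_code_R D (codeC D)"
proof -
  have z: "cw D (\<lambda>_. 0, \<lambda>_. 0, \<lambda>_. 0) = (\<lambda>s. (0, 0))"
    unfolding cw_def ipR_def by (auto simp: fun_eq_iff split: prod.splits)
  have add: "(\<lambda>s. R_add (cw D r1 s) (cw D r2 s)) = cw D (\<lambda>i. fst r1 i + fst r2 i,
      \<lambda>i. fst (snd r1) i + fst (snd r2) i, \<lambda>i. snd (snd r1) i + snd (snd r2) i)" for r1 r2
    unfolding cw_def ipR_def R_add_def
    by (auto simp: fun_eq_iff dotv_add_left split: prod.splits)
  have mul: "(\<lambda>s. R_mult a (cw D r s)) = cw D (\<lambda>i. fst a * fst r i,
      \<lambda>i. fst a * fst (snd r) i + snd a * fst r i, \<lambda>i. fst a * snd (snd r) i)" for a r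
    unfolding cw_def ipR_def R_mult_def
    by (auto simp: fun_eq_iff dotv_add_left dotv_scale_left algebra_simps split: prod.splits)
  have 1: "\<forall>c\<in>range (cw D). \<forall>s. s \<notin> D \<longrightarrow> c s = (0, 0)" by (auto simp: cw_def)
  have 2: "(\<lambda>s. (0, 0)) \<in> range (cw D)" unfolding z[symmetric] by (rule rangeI)
  have 3: "\<forall>c1\<in>range (cw D). \<forall>c2\<in>range (cw D). (\<lambda>s. R_add (c1 s) (c2 s)) \<in> range (cw D)"
  proof (intro ballI)
    fix c1 c2 assume "c1 \<in> range (cw D)" "c2 \<in> range (cw D)"
    then obtain r1 r2 where c: "c1 = cw D r1" "c2 = cw D r2" by blast
    show "(\<lambda>s. R_add (c1 s) (c2 s)) \<in> range (cw D)" unfolding c add by (rule rangeI)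
  qed
  have 4: "\<forall>a. \<forall>c\<in>range (cw D). (\<lambda>s. R_mult a (c s)) \<in> range (cw D)"
  proof (intro allI ballI)
    fix a c assume "c \<in> range (cw D)"
    then obtain r where c: "c = cw D r" by blast
    show "(\<lambda>s. R_mult a (c s)) \<in> range (cw D)" unfolding c mul by (rule rangeI)
  qed
  show ?thesis unfolding linear_code_R_def codeC_eq using 1 2 3 4 by blast
qed

lemma card_zeroset: "card {d :: 'm::finite \<Rightarrow> 'a::{finite,zero}. \<forall>i\<in>P. d i = 0}
   = card (UNIV :: 'a set) ^ (card (UNIV :: 'm set) - card P)"
proof -
  have "{d :: 'm \<Rightarrow> 'a. \<forall>i\<in>P. d i = 0} = Delta (- P)" unfolding Delta_def supp_def by auto
  thus ?thesis by (simp add: card_Delta Compl_eq_Diff_UNIV card_Diff_subset)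
qed

lemma card_E3: "card (E3 A B :: ('m::finite,'a::{finite,field}) elt_Rm set)
   = card (UNIV :: 'a set) ^ (card (UNIV :: 'm set) - card (A \<union> B)) - 1"
proof -
  let ?Z = "{d :: 'm \<Rightarrow> 'a. \<forall>i\<in>A \<union> B. d i = 0}"
  have "E3 A B = (\<lambda>d. (d, \<lambda>_. 0, \<lambda>_. 0)) ` (?Z - {\<lambda>_. 0})" unfolding E3_def by auto
  moreover have "inj_on (\<lambda>d. (d, (\<lambda>_. 0) :: 'm \<Rightarrow> 'a, (\<lambda>_. 0) :: 'm \<Rightarrow> 'a)) (?Z - {\<lambda>_. 0})" by (rule inj_onI) auto
  ultimately have "card (E3 A B :: ('m,'a) elt_Rm set) = card (?Z - {\<lambda>_. 0})" by (simp add: card_image)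
  also have "\<dots> = card ?Z - 1" by (rule card_Diff_singleton) auto
  finally show ?thesis by (simp only: card_zeroset)
qed

lemma card_E2: "card (E2 A B :: ('m::finite,'a::{finite,field}) elt_Rm set)
   = 2 * (card (UNIV :: 'a set) ^ (card (UNIV :: 'm set) - card B) - card (UNIV :: 'a set) ^ (card (UNIV :: 'm set) - card (A \<union> B)))"
proof -
  let ?ZB = "{d :: 'm \<Rightarrow> 'a. \<forall>i\<in>B. d i = 0}"
  let ?ZAB = "{d :: 'm \<Rightarrow> 'a. \<forall>i\<in>A \<union> B. d i = 0}"
  let ?G = "{d :: 'm \<Rightarrow> 'a. (\<forall>i\<in>B. d i = 0) \<and> (\<exists>i\<in>A. d i \<noteq> 0)}"
  have G: "?G = ?ZB - ?ZAB" by auto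
  have cG: "card ?G = card ?ZB - card ?ZAB" unfolding G by (rule card_Diff_subset) auto
  let ?f1 = "\<lambda>d. (d, (\<lambda>_. 0) :: 'm \<Rightarrow> 'a, (\<lambda>_. 0) :: 'm \<Rightarrow> 'a)"
  let ?f2 = "\<lambda>d. (d, nd A d, (\<lambda>_. 0) :: 'm \<Rightarrow> 'a)"
  have E: "E2 A B = ?f1 ` ?G \<union> ?f2 ` ?G" unfolding E2_def by auto
  have ndnz: "nd A d \<noteq> (\<lambda>_. 0)" if dG: "d \<in> ?G" for d
  proof -
    obtain i where "i \<in> A" "d i \<noteq> 0" using dG by blast
    hence "nd A d i \<noteq> 0" unfolding nd_def by simp
    thus ?thesis by auto
  qed
  have disj: "?f1 ` ?G \<inter> ?f2 ` ?G = {}"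
  proof (rule equals0I)
    fix x assume "x \<in> ?f1 ` ?G \<inter> ?f2 ` ?G"
    then obtain d1 d2 where d: "d1 \<in> ?G" "d2 \<in> ?G" "x = ?f1 d1" "x = ?f2 d2" by blast
    hence "?f1 d1 = ?f2 d2" by (simp only:)
    hence "(\<lambda>_. 0) = nd A d2" by (metis prod.inject)
    with ndnz[OF d(2)] show False by simp
  qed
  have i1: "inj_on ?f1 ?G" by (rule inj_onI) auto
  have i2: "inj_on ?f2 ?G" by (rule inj_onI) auto
  have "card (E2 A B :: ('m,'a) elt_Rm set) = card (?f1 ` ?G) + card (?f2 ` ?G)"
    unfolding E by (rule card_Un_disjoint) (use disj in auto)
  also have "\<dots> = 2 * card ?G" using card_image[OF i1] card_image[OF i2] by simp
  finally show ?thesis unfolding cG card_zeroset .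
qed

theorem mainTheorem3:
  fixes A B C :: "'m::finite set"
    and q m :: nat
    and D :: "('m, 'a::{finite, field}) elt_Rm set"
    and Cd :: "(('m, 'a) elt_Rm \<Rightarrow> 'a ring_R) set"
    and W1 W2 W3 :: nat
  defines "q \<equiv> card (UNIV :: 'a set)" and "m \<equiv> card (UNIV :: 'm set)"
    and "D \<equiv> S3 A B C" and "Cd \<equiv> codeC D"
    and "W1 \<equiv> 2 * (q - 1) * q ^ (card A + card C - 1) * (q ^ m - q ^ card B)"
    and "W2 \<equiv> (q - 1) * q ^ (card A + card C - 1) * (2 * q ^ m - q ^ card B)"
    and "W3 \<equiv> 2 * (q - 1) * q ^ (m + card A + card C - 1)"
  assumes "m \<ge> 2"
    and "A \<noteq> {}" and "B \<noteq> {}" and "C \<noteq> {}"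
    and "card B < m"
  shows "linear_code_R D Cd
    \<and> card D = q ^ (card A + card C) * (q ^ m - q ^ card B)
    \<and> card Cd = q ^ (m + card A + card C)
    \<and> min_lee D Cd = W1
    \<and> (\<forall>c\<in>Cd. leeW D c \<in> {0, W1, W2, W3})
    \<and> card {c\<in>Cd. leeW D c = 0} = 1
    \<and> int (card {c\<in>Cd. leeW D c = W1})
        = int q ^ (m + card A + card C) - 2 * int q ^ (m - card B) + int q ^ (m - card (A \<union> B))
    \<and> int (card {c\<in>Cd. leeW D c = W2})
        = 2 * (int q ^ (m - card B) - int q ^ (m - card (A \<union> B)))
    \<and> int (card {c\<in>Cd. leeW D c = W3}) = int q ^ (m - card (A \<union> B)) - 1
    \<and> card (nonzero_weights D Cd) = (if A \<union> B = UNIV \<or> A \<subseteq> B then 2 else 3)"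
proof -
  note dfs = assms(1-7)
  have q_def: "q = card (UNIV :: 'a set)" and m_def: "m = card (UNIV :: 'm set)" and D_def: "D = S3 A B C"
    and Cd_def: "Cd = codeC D"
    and W1_def: "W1 = 2 * (q - 1) * q ^ (card A + card C - 1) * (q ^ m - q ^ card B)"
    and W2_def: "W2 = (q - 1) * q ^ (card A + card C - 1) * (2 * q ^ m - q ^ card B)"
    and W3_def: "W3 = 2 * (q - 1) * q ^ (m + card A + card C - 1)"
    using dfs by simp_all
  have hA: "A \<noteq> {}" and hB: "B \<noteq> {}" and hC: "C \<noteq> {}" and bm: "card B < m" using assms(9-12) by auto
  let ?T = "(UNIV :: ('m \<Rightarrow> 'a) set) \<times> (Delta A :: ('m \<Rightarrow> 'a) set) \<times> (Delta C :: ('m \<Rightarrow> 'a) set)"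
  let ?z = "(\<lambda>_. 0) :: 'm \<Rightarrow> 'a"
  let ?E2 = "E2 A B :: ('m,'a) elt_Rm set" and ?E3 = "E3 A B :: ('m,'a) elt_Rm set"
  let ?a = "card A" and ?b = "card B" and ?c = "card C" and ?u = "card (A \<union> B)"
  have q2: "q \<ge> 2" unfolding q_def by (rule q_ge2)
  have a1: "?a \<ge> 1" using hA by (simp add: Suc_le_eq card_gt_0_iff)
  have c1: "?c \<ge> 1" using hC by (simp add: Suc_le_eq card_gt_0_iff)
  have "B \<noteq> UNIV" using bm unfolding m_def by auto
  then obtain j where jB: "j \<notin> B" by auto
  have bu: "?b \<le> ?u" by (rule card_mono) auto
  have um: "?u \<le> m" unfolding m_def by (rule card_mono) auto
  have CdT: "Cd = cw D ` ?T"
  proof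
    show "Cd \<subseteq> cw D ` ?T"
    proof
      fix x assume "x \<in> Cd"
      then obtain d e f where x: "x = cw D (d, e, f)" unfolding Cd_def codeC_eq by auto
      have "x = cw D (d, \<lambda>i. if i \<in> A then e i else 0, \<lambda>i. if i \<in> C then f i else 0)"
        unfolding x D_def by (rule cw_proj)
      moreover have "(d, \<lambda>i. if i \<in> A then e i else 0, \<lambda>i. if i \<in> C then f i else 0) \<in> ?T"
        unfolding Delta_def supp_def by auto
      ultimately show "x \<in> cw D ` ?T" by blast
    qed
    show "cw D ` ?T \<subseteq> Cd" unfolding Cd_def codeC_eq by auto
  qed
  have inj: "inj_on (cw D) ?T" unfolding D_def by (rule cw_inj[OF jB])
  have cardT: "card ?T = q ^ (m + ?a + ?c)"
  proof -
    have u: "card (UNIV :: ('m \<Rightarrow> 'a) set) = q ^ m"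
      using card_Delta[of "UNIV :: 'm set", where 'a='a] unfolding q_def m_def by simp
    have "card ?T = card (UNIV :: ('m \<Rightarrow> 'a) set) * (card (Delta A :: ('m \<Rightarrow> 'a) set) * card (Delta C :: ('m \<Rightarrow> 'a) set))"
      unfolding card_cartesian_product ..
    also have "\<dots> = q ^ m * (q ^ ?a * q ^ ?c)" unfolding u card_Delta q_def ..
    finally show ?thesis by (simp add: power_add)
  qed
  have cardsub: "card {c\<in>Cd. P (leeW D c)} = card {r\<in>?T. P (leeW D (cw D r))}" for P
  proof -
    have "{c\<in>Cd. P (leeW D c)} = cw D ` {r\<in>?T. P (leeW D (cw D r))}" unfolding CdT by auto
    moreover have "inj_on (cw D) {r\<in>?T. P (leeW D (cw D r))}" using inj by (rule inj_on_subset) auto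
    ultimately show ?thesis by (simp add: card_image)
  qed
  define cU where "cU = (q - 1) * q ^ (?a + m + ?c - 1)"
  define cB where "cB = (q - 1) * q ^ (?a + ?b + ?c - 1)"
  define X where "X = (q - 1) * q ^ (?a + ?c - 1)"
  have cUX: "cU = X * q ^ m"
  proof -
    have "?a + m + ?c - 1 = (?a + ?c - 1) + m" using a1 by simp
    thus ?thesis unfolding cU_def X_def by (simp add: power_add)
  qed
  have cBX: "cB = X * q ^ ?b"
  proof -
    have "?a + ?b + ?c - 1 = (?a + ?c - 1) + ?b" using a1 by simp
    thus ?thesis unfolding cB_def X_def by (simp add: power_add)
  qed
  have X0: "X > 0" unfolding X_def using q2 by simp
  have qbm: "q ^ ?b < q ^ m" using q2 bm by (simp add: power_strict_increasing)
  have cBU: "cB < cU" unfolding cUX cBX using X0 qbm by simp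
  have W1e: "W1 = 2 * (cU - cB)"
  proof -
    have "W1 = 2 * (X * (q ^ m - q ^ ?b))" unfolding W1_def X_def by (simp only: mult.assoc)
    also have "X * (q ^ m - q ^ ?b) = X * q ^ m - X * q ^ ?b" by (rule diff_mult_distrib2)
    finally show ?thesis unfolding cUX cBX .
  qed
  have W2e: "W2 = cU + (cU - cB)"
  proof -
    have "W2 = X * (2 * q ^ m - q ^ ?b)" unfolding W2_def X_def by (simp add: mult.assoc)
    also have "\<dots> = 2 * (X * q ^ m) - X * q ^ ?b" by (simp add: diff_mult_distrib2)
    also have "\<dots> = cU + (cU - cB)" unfolding cUX cBX using cBU cUX cBX by simp
    finally show ?thesis .
  qed
  have W3e: "W3 = 2 * cU"
  proof -
    have "m + ?a + ?c - 1 = (?a + ?c - 1) + m" using a1 by simp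
    thus ?thesis unfolding W3_def cUX X_def by (simp add: power_add mult.assoc)
  qed
  have cB0: "cB > 0" unfolding cBX using X0 q2 by simp
  have Wlt: "0 < W1" "W1 < W2" "W2 < W3" unfolding W1e W2e W3e using cBU cB0 by arith+
  define wt where "wt r = (if r = (?z, ?z, ?z) then 0 else if r \<in> ?E3 then W3
      else if r \<in> ?E2 then W2 else W1)" for r :: "('m,'a) elt_Rm"
  have wteq: "leeW D (cw D r) = wt r" if rT: "r \<in> ?T" for r
  proof -
    obtain d e f where r: "r = (d, e, f)" by (cases r) auto
    have e: "e \<in> Delta A" "f \<in> Delta C" using rT r by auto
    show ?thesis unfolding r D_def wclass[OF hA e, of B] wt_def W1e W2e W3e cU_def cB_def q_def m_def
      by simp
  qed
  have E3T: "?E3 \<subseteq> ?T" unfolding E3_def by auto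
  have E2T: "?E2 \<subseteq> ?T"
  proof
    fix x assume "x \<in> ?E2"
    then obtain d e where x: "x = (d, e, ?z)" "e = ?z \<or> e = nd A d" unfolding E2_def by auto
    have "nd A d \<in> Delta A" unfolding nd_def Delta_def supp_def by auto
    thus "x \<in> ?T" using x by auto
  qed
  have E23: "?E2 \<inter> ?E3 = {}" unfolding E2_def E3_def by auto
  have z3: "(?z, ?z, ?z) \<notin> ?E3" unfolding E3_def by auto
  have z2: "(?z, ?z, ?z) \<notin> ?E2" unfolding E2_def by auto
  have zT: "(?z, ?z, ?z) \<in> ?T" by auto
  have S0: "{r\<in>?T. wt r = 0} = {(?z, ?z, ?z)}" using Wlt zT unfolding wt_def by auto
  have S3s: "{r\<in>?T. wt r = W3} = ?E3" using Wlt E3T z3 unfolding wt_def by auto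
  have S2s: "{r\<in>?T. wt r = W2} = ?E2" using Wlt E2T z2 E23 unfolding wt_def by auto
  have S1s: "{r\<in>?T. wt r = W1} = ?T - {(?z, ?z, ?z)} - ?E3 - ?E2" using Wlt unfolding wt_def by auto
  have setW: "{r\<in>?T. P (leeW D (cw D r))} = {r\<in>?T. P (wt r)}" for P using wteq by auto
  have cE3: "card (?E3 :: ('m,'a) elt_Rm set) = q ^ (m - ?u) - 1"
    unfolding q_def m_def by (rule card_E3)
  have cE2: "card (?E2 :: ('m,'a) elt_Rm set) = 2 * (q ^ (m - ?b) - q ^ (m - ?u))"
    unfolding q_def m_def by (rule card_E2)
  have qu1: "q ^ (m - ?u) \<ge> 1" using q2 by simp
  have qub: "q ^ (m - ?u) \<le> q ^ (m - ?b)" using q2 bu by (intro power_increasing) auto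
  have intdiff: "int (card (X' - Y)) = int (card X') - int (card Y)" if "Y \<subseteq> X'" "finite X'" for X' Y :: "('m,'a) elt_Rm set"
    using that by (simp add: card_Diff_subset card_mono of_nat_diff finite_subset)
  have c1s: "int (card {r\<in>?T. wt r = W1}) = int (card ?T) - 1 - int (card ?E3) - int (card ?E2)"
  proof -
    have "int (card (?T - {(?z, ?z, ?z)} - ?E3 - ?E2))
        = int (card (?T - {(?z, ?z, ?z)} - ?E3)) - int (card ?E2)"
      by (rule intdiff) (use E2T E23 z2 in auto)
    also have "int (card (?T - {(?z, ?z, ?z)} - ?E3)) = int (card (?T - {(?z, ?z, ?z)})) - int (card ?E3)"
      by (rule intdiff) (use E3T z3 in auto)
    also have "int (card (?T - {(?z, ?z, ?z)})) = int (card ?T) - int (card {(?z, ?z, ?z)})"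
      by (rule intdiff) (use zT in auto)
    finally show ?thesis unfolding S1s by simp
  qed
  obtain i0 where i0: "i0 \<in> B" using hB by auto
  have w1wit: "wt (unitv i0, ?z, ?z) = W1"
  proof -
    have "unitv i0 i0 \<noteq> (0::'a)" unfolding unitv_def by simp
    hence "(unitv i0, ?z, ?z) \<noteq> (?z, ?z, ?z)" "(unitv i0, ?z, ?z) \<notin> ?E3" "(unitv i0, ?z, ?z) \<notin> ?E2"
      using i0 unfolding E3_def E2_def by (auto simp: fun_eq_iff)
    thus ?thesis unfolding wt_def by simp
  qed
  have NW: "nonzero_weights D Cd = {W1} \<union> (if ?E2 = {} then {} else {W2}) \<union> (if ?E3 = {} then {} else {W3})"
  proof
    show "nonzero_weights D Cd \<subseteq> {W1} \<union> (if ?E2 = {} then {} else {W2}) \<union> (if ?E3 = {} then {} else {W3})"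
    proof
      fix w assume "w \<in> nonzero_weights D Cd"
      then obtain r where r: "r \<in> ?T" "w = wt r" "wt r \<noteq> 0"
        unfolding nonzero_weights_def CdT using wteq by auto
      thus "w \<in> {W1} \<union> (if ?E2 = {} then {} else {W2}) \<union> (if ?E3 = {} then {} else {W3})"
        unfolding wt_def by (auto split: if_splits)
    qed
    have mem: "wt r \<in> nonzero_weights D Cd" if "r \<in> ?T" "wt r \<noteq> 0" for r
    proof -
      have "cw D r \<in> Cd" unfolding CdT using that(1) by (rule imageI)
      moreover have "leeW D (cw D r) = wt r" using wteq that(1) by blast
      ultimately have "wt r = leeW D (cw D r) \<and> cw D r \<in> Cd \<and> leeW D (cw D r) \<noteq> 0" using that(2) by simp
      hence "\<exists>c. wt r = leeW D c \<and> c \<in> Cd \<and> leeW D c \<noteq> 0"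
        by (rule exI[where P="\<lambda>c. wt r = leeW D c \<and> c \<in> Cd \<and> leeW D c \<noteq> 0"])
      thus ?thesis unfolding nonzero_weights_def by (rule CollectI)
    qed
    have "(unitv i0, ?z, ?z) \<in> ?T" by simp
    hence "W1 \<in> nonzero_weights D Cd" using mem w1wit Wlt by fastforce
    moreover have "W2 \<in> nonzero_weights D Cd" if ne: "?E2 \<noteq> {}"
    proof -
      obtain r where "r \<in> ?E2" using ne by auto
      hence "r \<in> ?T" "wt r = W2" using E2T z2 E23 unfolding wt_def by auto
      thus ?thesis using mem Wlt by fastforce
    qed
    moreover have "W3 \<in> nonzero_weights D Cd" if ne: "?E3 \<noteq> {}"
    proof -
      obtain r where "r \<in> ?E3" using ne by auto
      hence "r \<in> ?T" "wt r = W3" using E3T z3 unfolding wt_def by auto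
      thus ?thesis using mem Wlt by fastforce
    qed
    ultimately show "{W1} \<union> (if ?E2 = {} then {} else {W2}) \<union> (if ?E3 = {} then {} else {W3}) \<subseteq> nonzero_weights D Cd"
      by auto
  qed
  have E2e: "?E2 = {} \<longleftrightarrow> A \<subseteq> B"
  proof
    assume "?E2 = {}"
    show "A \<subseteq> B"
    proof (rule ccontr)
      assume "\<not> A \<subseteq> B"
      then obtain i where "i \<in> A" "i \<notin> B" by auto
      hence "(unitv i, ?z, ?z) \<in> ?E2" unfolding E2_def unitv_def by auto
      thus False using \<open>?E2 = {}\<close> by auto
    qed
  next
    assume "A \<subseteq> B" thus "?E2 = {}" unfolding E2_def by auto
  qed
  have E3e: "?E3 = {} \<longleftrightarrow> A \<union> B = UNIV"
  proof
    assume "?E3 = {}"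
    show "A \<union> B = UNIV"
    proof (rule ccontr)
      assume "A \<union> B \<noteq> UNIV"
      then obtain i where "i \<notin> A \<union> B" by auto
      hence "\<forall>k\<in>A \<union> B. unitv i k = (0::'a)" unfolding unitv_def by auto
      moreover have "unitv i \<noteq> ?z" unfolding unitv_def by (auto simp: fun_eq_iff)
      ultimately have "(unitv i, ?z, ?z) \<in> ?E3" unfolding E3_def by blast
      thus False using \<open>?E3 = {}\<close> by auto
    qed
  next
    assume "A \<union> B = UNIV" thus "?E3 = {}" unfolding E3_def by (auto simp: fun_eq_iff)
  qed
  have notboth: "\<not> (A \<union> B = UNIV \<and> A \<subseteq> B)"
  proof
    assume "A \<union> B = UNIV \<and> A \<subseteq> B"
    hence "B = UNIV" by auto
    thus False using bm unfolding m_def by simp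
  qed
  have cardNW: "card (nonzero_weights D Cd) = (if A \<union> B = UNIV \<or> A \<subseteq> B then 2 else 3)"
    unfolding NW using Wlt notboth E2e E3e by (auto simp: card_insert_if)
  have minNW: "min_lee D Cd = W1"
    unfolding min_lee_def NW using Wlt by (intro Min_eqI) (auto split: if_splits)
  have part1: "linear_code_R D Cd" unfolding Cd_def by (rule lin_code)
  have part2: "card D = q ^ (?a + ?c) * (q ^ m - q ^ ?b)"
  proof -
    have sub: "VV A B C \<subseteq> (VV A UNIV C :: ('m,'a) elt_Rm set)" unfolding VV_def by auto
    have "card D = card (VV A UNIV C :: ('m,'a) elt_Rm set) - card (VV A B C :: ('m,'a) elt_Rm set)"
      unfolding D_def S3_eq using sub by (simp add: card_Diff_subset)
    also have "\<dots> = q ^ (?a + m + ?c) - q ^ (?a + ?b + ?c)" unfolding card_VV q_def m_def by simp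
    also have "\<dots> = q ^ (?a + ?c) * (q ^ m - q ^ ?b)" by (simp add: diff_mult_distrib2 power_add algebra_simps)
    finally show ?thesis .
  qed
  have part3: "card Cd = q ^ (m + ?a + ?c)" unfolding CdT card_image[OF inj] cardT ..
  have part5: "\<forall>c\<in>Cd. leeW D c \<in> {0, W1, W2, W3}" unfolding CdT using wteq unfolding wt_def by auto
  have part6: "card {c\<in>Cd. leeW D c = 0} = 1" unfolding cardsub[of "\<lambda>w. w = 0"] setW[of "\<lambda>w. w = 0"] S0 by simp
  have part7: "int (card {c\<in>Cd. leeW D c = W1})
        = int q ^ (m + card A + card C) - 2 * int q ^ (m - card B) + int q ^ (m - card (A \<union> B))"
    unfolding cardsub[of "\<lambda>w. w = W1"] setW[of "\<lambda>w. w = W1"] c1s cardT cE3 cE2 using qu1 qub by (simp add: of_nat_diff algebra_simps)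
  have part8: "int (card {c\<in>Cd. leeW D c = W2}) = 2 * (int q ^ (m - card B) - int q ^ (m - card (A \<union> B)))"
    unfolding cardsub[of "\<lambda>w. w = W2"] setW[of "\<lambda>w. w = W2"] S2s cE2 using qub by (simp add: of_nat_diff)
  have part9: "int (card {c\<in>Cd. leeW D c = W3}) = int q ^ (m - card (A \<union> B)) - 1"
    unfolding cardsub[of "\<lambda>w. w = W3"] setW[of "\<lambda>w. w = W3"] S3s cE3 using qu1 by (simp add: of_nat_diff)
  show ?thesis using part1 part2 part3 minNW part5 part6 part7 part8 part9 cardNW by blast
qed

end
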